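(* Let $R$ be a random length-$k$ ranking generated by a PL+C model. For items $i,j\in\mathcal U$, write $i\succ_R j$ if $i$ is ranked higher than $j$ in $R$. If $\Pr(i\succ_R j\mid i,j\in R)>1/2$, then $u_i>u_j$.
   Context: PL+C model: universe $\mathcal U=\{1,\dots,n\}$, fixed ranking length $k\le n$. Each item $h$ has a utility $u_h\in\mathbb R$ and a consideration probability $p_h\in(0,1]$. A consideration set $C$ is drawn by including each item independently with probability $p_h$, conditioned on $|C|\ge k$. Given $C$, a length-$k$ ranking $r=(r_1,\dots,r_k)$ of distinct items is drawn with Plackett--Luce probability $\Pr_{PL}(r\mid C)=\prod_{t=1}^k \frac{\exp(u_{r_t})}{\sum_{h\in C\setminus\{r_1,\dots,r_{t-1}\}}\exp(u_h)}$ if all $r_t\in C$, else $0$. "$i,j\in R$" means both items appear in the ranking $R$. *)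

theory Defs
  imports Complex_Main
begin

definition cons_weight :: "nat set \<Rightarrow> (nat \<Rightarrow> real) \<Rightarrow> nat set \<Rightarrow> real" where
  "cons_weight U p C = (\<Prod>h\<in>U. if h \<in> C then p h else 1 - p h)"

definition valid_cons_sets :: "nat set \<Rightarrow> nat \<Rightarrow> nat set set" where
  "valid_cons_sets U k = {C. C \<subseteq> U \<and> k \<le> card C}"

definition cons_prob :: "nat set \<Rightarrow> nat \<Rightarrow> (nat \<Rightarrow> real) \<Rightarrow> nat set \<Rightarrow> real" where
  "cons_prob U k p C =
     (if C \<in> valid_cons_sets U k
      then cons_weight U p C / (\<Sum>C'\<in>valid_cons_sets U k. cons_weight U p C')
      else 0)"

definition pl_prob :: "(nat \<Rightarrow> real) \<Rightarrow> nat set \<Rightarrow> nat list \<Rightarrow> real" where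
  "pl_prob u C r =
     (if distinct r \<and> set r \<subseteq> C
      then (\<Prod>t<length r. exp (u (r ! t)) / (\<Sum>h\<in>C - set (take t r). exp (u h)))
      else 0)"

definition rankings :: "nat set \<Rightarrow> nat \<Rightarrow> nat list set" where
  "rankings U k = {r. distinct r \<and> length r = k \<and> set r \<subseteq> U}"

definition plc_prob :: "nat set \<Rightarrow> nat \<Rightarrow> (nat \<Rightarrow> real) \<Rightarrow> (nat \<Rightarrow> real) \<Rightarrow> nat list \<Rightarrow> real" where
  "plc_prob U k p u r = (\<Sum>C\<in>valid_cons_sets U k. cons_prob U k p C * pl_prob u C r)"

definition ranked_above :: "nat \<Rightarrow> nat \<Rightarrow> nat list \<Rightarrow> bool" where
  "ranked_above i j r = (\<exists>a b. a < b \<and> b < length r \<and> r ! a = i \<and> r ! b = j)"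

definition pair_pref :: "nat set \<Rightarrow> nat \<Rightarrow> (nat \<Rightarrow> real) \<Rightarrow> (nat \<Rightarrow> real) \<Rightarrow> nat \<Rightarrow> nat \<Rightarrow> real" where
  "pair_pref U k p u i j =
     (\<Sum>r\<in>{r \<in> rankings U k. ranked_above i j r}. plc_prob U k p u r)
     / (\<Sum>r\<in>{r \<in> rankings U k. i \<in> set r \<and> j \<in> set r}. plc_prob U k p u r)"

end

theory Submission
  imports Defs
begin

definition swp :: "nat \<Rightarrow> nat \<Rightarrow> nat \<Rightarrow> nat" where
  "swp i j h = (if h = i then j else if h = j then i else h)"

lemma swp_swp[simp]: "swp i j (swp i j h) = h" by (auto simp: swp_def)
lemma swp_i[simp]: "swp i j i = j" by (auto simp: swp_def)
lemma swp_j[simp]: "swp i j j = i" by (auto simp: swp_def)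
lemma inj_swp: "inj (swp i j)" by (metis injI swp_swp)

lemma swp_image: "i \<in> A \<Longrightarrow> j \<in> A \<Longrightarrow> swp i j ` A = A"
  unfolding swp_def by (auto simp: image_iff)

lemma swp_image2: "i \<notin> A \<Longrightarrow> j \<notin> A \<Longrightarrow> swp i j ` A = A"
  unfolding swp_def by (auto simp: image_iff)

lemma swp_image3: "i \<in> A \<Longrightarrow> j \<notin> A \<Longrightarrow> swp i j ` A = insert j (A - {i})"
  unfolding swp_def by (auto simp: image_iff)

lemma ranked_above_map: "ranked_above i j r \<Longrightarrow> ranked_above (f i) (f j) (map f r)"
  unfolding ranked_above_def by (metis length_map less_trans nth_map)

lemma ranked_above_set: "ranked_above i j r \<Longrightarrow> i \<in> set r \<and> j \<in> set r"
  unfolding ranked_above_def by (metis less_trans nth_mem)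

lemma ranked_above_not_both:
  assumes "distinct r" "ranked_above i j r" "ranked_above j i r" shows False
proof -
  obtain a b where ab: "a < b" "b < length r" "r ! a = i" "r ! b = j"
    using assms(2) unfolding ranked_above_def by blast
  obtain a' b' where ab': "a' < b'" "b' < length r" "r ! a' = j" "r ! b' = i"
    using assms(3) unfolding ranked_above_def by blast
  have "a = b'" using ab ab' assms(1) nth_eq_iff_index_eq by (metis less_trans)
  moreover have "b = a'" using ab ab' assms(1) nth_eq_iff_index_eq by (metis less_trans)
  ultimately show False using ab ab' by simp
qed

lemma ranked_above_irrefl: "distinct r \<Longrightarrow> \<not> ranked_above i i r"
  unfolding ranked_above_def by (metis less_trans nat_neq_iff nth_eq_iff_index_eq)

lemma ranked_above_cases:
  assumes "i \<in> set r" "j \<in> set r" "i \<noteq> j"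
  shows "ranked_above i j r \<or> ranked_above j i r"
proof -
  obtain a where a: "a < length r" "r ! a = i" using assms(1) by (metis in_set_conv_nth)
  obtain b where b: "b < length r" "r ! b = j" using assms(2) by (metis in_set_conv_nth)
  have "a \<noteq> b" using a b assms(3) by auto
  then show ?thesis unfolding ranked_above_def using a b by (metis nat_neq_iff)
qed

lemma ranked_above_take:
  assumes "distinct r" "ranked_above i j r" "j \<in> set (take t r)"
  shows "i \<in> set (take t r)"
proof -
  obtain a b where ab: "a < b" "b < length r" "r ! a = i" "r ! b = j"
    using assms(2) unfolding ranked_above_def by blast
  obtain b' where b': "b' < length (take t r)" "take t r ! b' = j"
    using assms(3) by (metis in_set_conv_nth)
  have "b' < t" "r ! b' = j" using b' by auto
  moreover have "b' < length r" using b' by simp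
  ultimately have "b' = b" using ab assms(1) nth_eq_iff_index_eq by metis
  then have "a < length (take t r)" using ab \<open>b' < t\<close> by simp
  then show ?thesis using ab by (metis in_set_conv_nth nth_take length_take min_less_iff_conj)
qed

lemma pl_nonneg: "0 \<le> pl_prob u C r"
  unfolding pl_prob_def by (auto intro!: prod_nonneg divide_nonneg_nonneg sum_nonneg)

lemma prod_nth_set:
  assumes "distinct r" shows "(\<Prod>t<length r. g (r ! t)) = (\<Prod>x\<in>set r. g x)"
proof -
  have "set r = (!) r ` {..<length r}" by (auto simp: set_conv_nth)
  moreover have "inj_on ((!) r) {..<length r}" using assms by (simp add: inj_on_def nth_eq_iff_index_eq)
  ultimately show ?thesis by (simp add: prod.reindex)
qed

lemma pl_swap_le:
  assumes C: "finite C" and d: "distinct r" and sub: "set r \<subseteq> C"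
    and ra: "ranked_above i j r" and uij: "u i \<le> u j"
  shows "pl_prob u C r \<le> pl_prob u C (map (swp i j) r)"
proof -
  define r' where "r' = map (swp i j) r"
  have ij: "i \<in> set r" "j \<in> set r" using ranked_above_set[OF ra] by auto
  have d': "distinct r'" unfolding r'_def using d inj_swp by (simp add: distinct_map inj_on_def)
  have set': "set r' = set r" unfolding r'_def using ij by (simp add: swp_image)
  have len: "length r' = length r" unfolding r'_def by simp
  define den where "den x t = (\<Sum>h\<in>C - set (take t x). exp (u h))" for x t
  have num: "(\<Prod>t<length r. exp (u (r ! t))) = (\<Prod>t<length r. exp (u (r' ! t)))"
  proof -
    have "(\<Prod>t<length r. exp (u (r ! t))) = (\<Prod>x\<in>set r. exp (u x))" by (rule prod_nth_set[OF d])
    also have "\<dots> = (\<Prod>x\<in>set r'. exp (u x))" using set' by simp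
    also have "\<dots> = (\<Prod>t<length r'. exp (u (r' ! t)))" by (rule prod_nth_set[OF d', symmetric])
    finally show ?thesis using len by simp
  qed
  have pos: "0 < den r' t" if "t < length r" for t
  proof -
    have tl: "t < length r'" using that len by simp
    have "r' ! t \<in> C" using tl set' sub nth_mem by blast
    moreover have "r' ! t \<notin> set (take t r')"
    proof
      assume "r' ! t \<in> set (take t r')"
      then obtain s where "s < length (take t r')" "take t r' ! s = r' ! t"
        by (metis in_set_conv_nth)
      then have "s < t" "r' ! s = r' ! t" by auto
      then show False using d' tl nth_eq_iff_index_eq by (metis less_trans less_irrefl)
    qed
    ultimately have mem: "r' ! t \<in> C - set (take t r')" by blast
    have fin: "finite (C - set (take t r'))" using C by simp
    show ?thesis unfolding den_def
      by (rule sum_pos2[OF fin mem]) simp_all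
  qed
  have le: "den r' t \<le> den r t" for t
  proof -
    let ?T = "set (take t r)"
    have T': "set (take t r') = swp i j ` ?T" unfolding r'_def by (simp add: take_map)
    show ?thesis
    proof (cases "i \<in> ?T")
      case True
      show ?thesis
      proof (cases "j \<in> ?T")
        case True
        then show ?thesis using \<open>i \<in> ?T\<close> unfolding den_def T' by (simp add: swp_image)
      next
        case False
        let ?Y = "C - ?T - {j}"
        have e1: "C - set (take t r') = insert i ?Y"
          using True False ij sub unfolding T' by (auto simp: swp_image3)
        have e2: "C - ?T = insert j ?Y" using False ij sub by auto
        have fY: "finite ?Y" using C by simp
        have niY: "i \<notin> ?Y" using True by simp
        have njY: "j \<notin> ?Y" by simp
        have "den r' t = exp (u i) + (\<Sum>h\<in>?Y. exp (u h))"
          unfolding den_def e1 using sum.insert[OF fY niY] .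
        also have "\<dots> \<le> exp (u j) + (\<Sum>h\<in>?Y. exp (u h))" using uij by simp
        also have "\<dots> = den r t" unfolding den_def by (subst e2) (rule sum.insert[OF fY njY, symmetric])
        finally show ?thesis .
      qed
    next
      case False
      then have "j \<notin> ?T" using ranked_above_take[OF d ra] by blast
      then show ?thesis using False unfolding den_def T' by (simp add: swp_image2)
    qed
  qed
  have c1: "distinct r \<and> set r \<subseteq> C" using d sub by simp
  have c2: "distinct r' \<and> set r' \<subseteq> C" using d' sub set' by simp
  have P1: "pl_prob u C r = (\<Prod>t<length r. exp (u (r ! t))) / (\<Prod>t<length r. den r t)"
    unfolding pl_prob_def den_def by (simp only: if_P[OF c1] prod_dividef)
  have P2: "pl_prob u C r' = (\<Prod>t<length r. exp (u (r ! t))) / (\<Prod>t<length r. den r' t)"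
  proof -
    have "pl_prob u C r' = (\<Prod>t<length r'. exp (u (r' ! t))) / (\<Prod>t<length r'. den r' t)"
      unfolding pl_prob_def den_def by (simp only: if_P[OF c2] prod_dividef)
    then show ?thesis by (simp only: len num)
  qed
  have A: "0 < (\<Prod>t<length r. den r' t)" using pos by (intro prod_pos) auto
  have B: "(\<Prod>t<length r. den r' t) \<le> (\<Prod>t<length r. den r t)"
    using pos le by (intro prod_mono) (auto intro: less_imp_le)
  have "0 < (\<Prod>t<length r. den r t)" using A B by linarith
  then have "(\<Prod>t<length r. exp (u (r ! t))) / (\<Prod>t<length r. den r t)
      \<le> (\<Prod>t<length r. exp (u (r ! t))) / (\<Prod>t<length r. den r' t)"
    using A B by (intro divide_left_mono) (auto intro: prod_nonneg)
  then show ?thesis using P1 P2 r'_def by simp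
qed

lemma cons_nonneg:
  assumes "\<And>h. h \<in> U \<Longrightarrow> 0 < p h \<and> p h \<le> 1"
  shows "0 \<le> cons_prob U k p C"
proof -
  have w: "0 \<le> cons_weight U p C'" for C'
    unfolding cons_weight_def using assms by (intro prod_nonneg) (auto simp: less_imp_le)
  show ?thesis unfolding cons_prob_def using w by (auto intro!: divide_nonneg_nonneg sum_nonneg)
qed

theorem lemma2:
  fixes n k :: nat and u p :: "nat \<Rightarrow> real" and i j :: nat
  assumes "k \<le> n"
    and "\<And>h. h \<in> {1..n} \<Longrightarrow> 0 < p h \<and> p h \<le> 1"
    and "i \<in> {1..n}" and "j \<in> {1..n}"
    and "pair_pref {1..n} k p u i j > 1/2"
  shows "u i > u j"
proof (rule ccontr)
  assume "\<not> u i > u j"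
  then have uij: "u i \<le> u j" by simp
  define U where "U = {1..n}"
  define R where "R = rankings U k"
  define P where "P r = plc_prob U k p u r" for r
  define A where "A = {r \<in> R. ranked_above i j r}"
  define B where "B = {r \<in> R. ranked_above j i r}"
  define Bo where "Bo = {r \<in> R. i \<in> set r \<and> j \<in> set r}"
  have iU: "i \<in> U" and jU: "j \<in> U" using assms unfolding U_def by auto
  have finU: "finite U" unfolding U_def by simp
  have finR: "finite R"
  proof -
    have "R \<subseteq> {xs. set xs \<subseteq> U \<and> length xs = k}" unfolding R_def rankings_def by auto
    moreover have "finite {xs. set xs \<subseteq> U \<and> length xs = k}"
      using finU by (rule finite_lists_length_eq)
    ultimately show ?thesis by (rule finite_subset)
  qed
  have Pnn: "0 \<le> P r" for r
    unfolding P_def plc_prob_def using assms(2)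
    by (intro sum_nonneg mult_nonneg_nonneg cons_nonneg pl_nonneg) (auto simp: U_def)
  have Ple: "P r \<le> P (map (swp i j) r)" if "r \<in> A" for r
  proof -
    have d: "distinct r" and ra: "ranked_above i j r" using that unfolding A_def R_def rankings_def by auto
    have st: "set (map (swp i j) r) = set r"
      using ranked_above_set[OF ra] by (simp add: swp_image)
    have "pl_prob u C r \<le> pl_prob u C (map (swp i j) r)" if C: "C \<in> valid_cons_sets U k" for C
    proof (cases "set r \<subseteq> C")
      case True
      have "finite C" using C finU unfolding valid_cons_sets_def by (auto intro: finite_subset)
      then show ?thesis using pl_swap_le True d ra uij by blast
    next
      case False
      then have "pl_prob u C r = 0" unfolding pl_prob_def by simp
      then show ?thesis using pl_nonneg by simp
    qed
    then show ?thesis unfolding P_def plc_prob_def using assms(2)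
      by (intro sum_mono mult_left_mono) (auto intro!: cons_nonneg simp: U_def)
  qed
  have mapR: "map (swp i j) r \<in> R" if "r \<in> R" for r
  proof -
    have "swp i j x \<in> U" if "x \<in> U" for x using that iU jU by (auto simp: swp_def)
    then show ?thesis using that inj_swp unfolding R_def rankings_def
      by (auto simp: distinct_map inj_on_def)
  qed
  have bij: "bij_betw (map (swp i j)) A B"
  proof (rule bij_betw_byWitness[where f'="map (swp i j)"])
    show "\<forall>a\<in>A. map (swp i j) (map (swp i j) a) = a" by (simp add: comp_def)
    show "\<forall>a\<in>B. map (swp i j) (map (swp i j) a) = a" by (simp add: comp_def)
    show "map (swp i j) ` A \<subseteq> B" unfolding A_def B_def
      using mapR ranked_above_map[of i j _ "swp i j"] by auto
    show "map (swp i j) ` B \<subseteq> A" unfolding A_def B_def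
      using mapR ranked_above_map[of j i _ "swp i j"] by auto
  qed
  have sB: "sum P B = (\<Sum>r\<in>A. P (map (swp i j) r))"
    using sum.reindex_bij_betw[OF bij, of P] by simp
  have NleN: "sum P A \<le> sum P B" unfolding sB using Ple by (rule sum_mono)
  have Nnn: "0 \<le> sum P A" using Pnn by (simp add: sum_nonneg)
  have pp: "pair_pref U k p u i j = sum P A / sum P Bo"
    unfolding pair_pref_def P_def A_def Bo_def R_def by simp
  have "pair_pref U k p u i j \<le> 1/2"
  proof (cases "i = j")
    case True
    then have "A = {}" unfolding A_def R_def rankings_def using ranked_above_irrefl by auto
    then show ?thesis unfolding pp by simp
  next
    case False
    have "Bo = A \<union> B" unfolding Bo_def A_def B_def
      using ranked_above_cases[OF _ _ False] ranked_above_set by blast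
    moreover have "A \<inter> B = {}" unfolding A_def B_def R_def rankings_def
      using ranked_above_not_both by blast
    moreover have "finite A" "finite B" using finR unfolding A_def B_def by auto
    ultimately have "sum P Bo = sum P A + sum P B" by (simp add: sum.union_disjoint)
    then show ?thesis unfolding pp using NleN Nnn
      by (cases "sum P A + sum P B = 0") (auto simp: field_simps)
  qed
  then show False using assms(5) unfolding U_def by simp
qed

end
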